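(* Let $q=2^m\geq 4$ with $m$ a positive integer, let $b\in\mathbb{F}_q^*$ and $\delta\in\mathbb{F}_{q^2}\setminus\mathbb{F}_q$. Put $$B=b^4(\delta^q+\delta)^4\delta^{q+1},\quad C=b^4(\delta^q+\delta)^4,\quad D=b^4(\delta^q+\delta)^5,$$ and define $S_{-1}=0$, $S_0=1$, $S_i=C^{2^{i-1}}S_{i-1}+D^{2^{i-1}}S_{i-2}$ for $i\geq1$. If the polynomial $$P(x)=b(x^q+x+\delta)^{1+(q^2+q)/4}+x$$ permutes $\mathbb{F}_{q^2}$, then its compositional inverse over $\mathbb{F}_{q^2}$ is $$P^{-1}(x)=x+b\left(\delta+\sum_{i=0}^{m-1}\left(S_{m-2-i}^{2^{i+1}}+D^{1-2^{i+1}}S_i\right)\left((x^q+x)^4+B\right)^{2^i}\right)^{1+(q^2+q)/4}.$$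
   Context: The compositional inverse of a permutation polynomial $f$ of $\mathbb{F}_{Q}$ is the unique polynomial $f^{-1}$ (modulo $x^Q-x$) with $f(f^{-1}(c))=f^{-1}(f(c))=c$ for all $c\in\mathbb{F}_Q$. *)

theory Defs
  imports Main
begin

text \<open>Shifted sequence: Sshift C D n = S_(n-1), i.e. Sshift C D 0 = S_(-1) = 0,
  Sshift C D 1 = S_0 = 1, and S_i = C^(2^(i-1)) S_(i-1) + D^(2^(i-1)) S_(i-2) for i >= 1.\<close>
fun Sshift :: "'a::field \<Rightarrow> 'a \<Rightarrow> nat \<Rightarrow> 'a" where
  "Sshift C D 0 = 0"
| "Sshift C D (Suc 0) = 1"
| "Sshift C D (Suc (Suc n)) = C ^ (2 ^ n) * Sshift C D (Suc n) + D ^ (2 ^ n) * Sshift C D n"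

definition S_seq :: "'a::field \<Rightarrow> 'a \<Rightarrow> int \<Rightarrow> 'a" where
  "S_seq C D i = (if i < -1 then 0 else Sshift C D (nat (i + 1)))"

end

theory Submission
  imports Defs "HOL-Computational_Algebra.Polynomial"
begin

lemma fermat_nz:
  fixes a :: "'a::{finite,field}"
  assumes "a \<noteq> 0"
  shows "a ^ (card (UNIV::'a set) - 1) = 1"
proof -
  let ?U = "UNIV - {0::'a}"
  have bij: "bij_betw (\<lambda>x. a * x) ?U ?U"
  proof (rule bij_betw_byWitness[where f'="\<lambda>x. inverse a * x"])
    show "\<forall>x\<in>?U. inverse a * (a * x) = x" using assms by (simp add: field_simps)
    show "\<forall>x\<in>?U. a * (inverse a * x) = x" using assms by (simp add: field_simps)
    show "(\<lambda>x. a * x) ` ?U \<subseteq> ?U" using assms by auto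
    show "(\<lambda>x. inverse a * x) ` ?U \<subseteq> ?U" using assms by auto
  qed
  have "prod (\<lambda>x. x) ?U = prod (\<lambda>x. a * x) ?U"
    using prod.reindex_bij_betw[OF bij, of "\<lambda>x. x"] by (simp only:)
  also have "\<dots> = a ^ card ?U * prod (\<lambda>x. x) ?U"
    by (simp add: prod.distrib)
  finally have eq: "prod (\<lambda>x. x) ?U = a ^ card ?U * prod (\<lambda>x. x) ?U" .
  have nz: "prod (\<lambda>x. x) ?U \<noteq> 0" by (subst prod_zero_iff) auto
  from eq nz have "a ^ card ?U = 1" by simp
  moreover have "card ?U = card (UNIV::'a set) - 1" by (simp add: card_Diff_singleton)
  ultimately show ?thesis by simp
qed

lemma fermat:
  fixes a :: "'a::{finite,field}"
  shows "a ^ card (UNIV::'a set) = a"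
proof -
  obtain k where k: "card (UNIV::'a set) = Suc k"
    using finite_UNIV_card_ge_0[where 'a='a] by (cases "card (UNIV::'a set)") auto
  show ?thesis
  proof (cases "a = 0")
    case True thus ?thesis by (simp add: k)
  next
    case False
    have "a ^ k = 1" using fermat_nz[OF False] k by simp
    thus ?thesis by (simp add: k)
  qed
qed

lemma char2_from_card:
  fixes dummy :: "'a::{finite,field}"
  assumes "even (card (UNIV::'a set))"
  shows "(1::'a) + 1 = 0"
proof -
  have "card (UNIV::'a set) > 0" using finite_UNIV_card_ge_0[where 'a='a] by simp
  then have "odd (card (UNIV::'a set) - 1)" using assms by simp
  then have "(-1::'a) ^ (card (UNIV::'a set) - 1) = -1" by simp
  moreover have "(-1::'a) ^ (card (UNIV::'a set) - 1) = 1" by (rule fermat_nz) simp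
  ultimately have "(-1::'a) = 1" by simp
  then have "(1::'a) + 1 = 1 + (-1)" by simp
  thus ?thesis by simp
qed

locale char2 =
  assumes c2: "(1::'a::field) + 1 = 0"
begin

lemma two: "(2::'a) = 0"
  using c2 by (simp only: one_add_one)

lemma dbl: "(x::'a) + x = 0"
  by (simp add: mult_2[symmetric] two)

lemma neg: "- (x::'a) = x"
proof -
  have "- x = - x + (x + x)" by (simp add: dbl)
  also have "\<dots> = x" by (simp add: add.assoc[symmetric])
  finally show ?thesis .
qed

lemma minus: "(x::'a) - y = x + y"
proof -
  have "x - y = x + - y" by (rule diff_conv_add_uminus)
  then show ?thesis by (simp only: neg)
qed

lemma sq_add: "((x::'a) + y) ^ 2 = x ^ 2 + y ^ 2"
proof -
  have "(x + y) ^ 2 = x^2 + y^2 + (x*y + x*y)" by (simp add: power2_eq_square algebra_simps)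
  thus ?thesis by (simp add: dbl)
qed

lemma frob_add: "((x::'a) + y) ^ (2 ^ n) = x ^ (2 ^ n) + y ^ (2 ^ n)"
proof (induction n)
  case 0 then show ?case by simp
next
  case (Suc n)
  have "(x + y) ^ (2 ^ Suc n) = ((x + y) ^ (2 ^ n)) ^ 2" by (simp add: power_mult[symmetric] mult.commute)
  also have "\<dots> = (x ^ (2 ^ n)) ^ 2 + (y ^ (2 ^ n)) ^ 2" by (simp add: Suc sq_add)
  finally show ?case by (simp add: power_mult[symmetric] mult.commute)
qed

lemma frob_sum: "(sum (f::_\<Rightarrow>'a) A) ^ (2 ^ n) = sum (\<lambda>i. f i ^ (2 ^ n)) A"
  by (induction A rule: infinite_finite_induct) (simp_all add: frob_add)

lemma eq_of_sum0: "(x::'a) + y = 0 \<Longrightarrow> x = y"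
proof -
  assume h: "x + y = 0"
  have "x = x + (y + y)" by (simp add: dbl)
  also have "\<dots> = (x + y) + y" by (simp add: add.assoc)
  also have "\<dots> = y" by (simp add: h)
  finally show "x = y" .
qed

lemma pow_inj: "(x::'a) ^ (2 ^ n) = y ^ (2 ^ n) \<Longrightarrow> x = y"
proof -
  assume "x ^ (2 ^ n) = y ^ (2 ^ n)"
  then have "(x + y) ^ (2 ^ n) = 0" by (simp add: frob_add dbl)
  then show "x = y" by (simp add: eq_of_sum0)
qed

end

context char2 begin

lemma pow2_sq: "((x::'a) ^ (2 ^ n)) ^ 2 = x ^ (2 ^ Suc n)"
  by (simp add: power_mult[symmetric] mult.commute)

lemma pow2_4: "((x::'a) ^ (2 ^ n)) ^ 4 = x ^ (2 ^ Suc (Suc n))"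
  by (simp add: power_mult[symmetric] mult.commute)

lemma sq_lin: "((a::'a) * x + b * y) ^ 2 = a^2 * x^2 + b^2 * y^2"
  by (simp add: sq_add power_mult_distrib)

lemma four_lin: "((a::'a) * x + b * y) ^ 4 = a^4 * x^4 + b^4 * y^4"
  using frob_add[of "a*x" "b*y" 2] by (simp add: power_mult_distrib)

lemma dual_pair:
  fixes C D :: 'a
  shows "Sshift C D (n+2) = C * Sshift C D (n+1) ^ 2 + D^2 * Sshift C D n ^ 4 \<and>
         Sshift C D (n+3) = C * Sshift C D (n+2) ^ 2 + D^2 * Sshift C D (n+1) ^ 4"
proof (induction n)
  case 0
  have "C ^ 2 * C + D ^ 2 = C * C^2 + D^2" by (simp add: mult.commute)
  then show ?case by (simp add: numeral_3_eq_3 numeral_2_eq_2)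
next
  case (Suc n)
  let ?U = "Sshift C D"
  define a0 a1 a2 a3 where "a0 = ?U n" "a1 = ?U (n+1)" "a2 = ?U (n+2)" "a3 = ?U (n+3)"
  define cN dN cM dM where "cN = C^(2^(n+2))" "dN = D^(2^(n+2))" "cM = C^(2^(n+1))" "dM = D^(2^(n+1))"
  have r4: "?U (n+4) = cN * a3 + dN * a2"
    unfolding a0_a1_a2_a3_def cN_dN_cM_dM_def by (simp add: numeral_eq_Suc)
  have r3: "a3 = cM * a2 + dM * a1"
    unfolding a0_a1_a2_a3_def cN_dN_cM_dM_def by (simp add: numeral_eq_Suc)
  have r2: "a2 = C^(2^n) * a1 + D^(2^n) * a0"
    unfolding a0_a1_a2_a3_def by (simp add: numeral_eq_Suc)
  have s3: "a3^2 = cN * a2^2 + dN * a1^2"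
    unfolding r3 sq_lin unfolding cN_dN_cM_dM_def pow2_sq by simp
  have s2: "a2^4 = cN * a1^4 + dN * a0^4"
    unfolding r2 four_lin unfolding cN_dN_cM_dM_def pow2_4 by (simp add: numeral_eq_Suc)
  have i1: "a3 = C * a2^2 + D^2 * a1^4"
    using conjunct2[OF Suc.IH] unfolding a0_a1_a2_a3_def by blast
  have i2: "a2 = C * a1^2 + D^2 * a0^4"
    using conjunct1[OF Suc.IH] unfolding a0_a1_a2_a3_def by blast
  have "?U (n+4) = C * a3^2 + D^2 * a2^4"
  proof -
    have "cN*a3 + dN*a2 = cN*(C*a2^2 + D^2*a1^4) + dN*(C*a1^2 + D^2*a0^4)"
      by (simp only: i1[symmetric] i2[symmetric])
    then show ?thesis unfolding r4 s3 s2 by (simp add: algebra_simps)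
  qed
  moreover have e: "Suc n + 2 = n + 3" "Suc n + 3 = n + 4" "Suc n + 1 = n + 2" by simp_all
  moreover have e5: "Suc n = n + 1" by simp
  ultimately show ?case unfolding e unfolding e5 using conjunct2[OF Suc.IH] unfolding a0_a1_a2_a3_def by blast
qed

lemma dual: "Sshift (C::'a) D (n+2) = C * Sshift C D (n+1) ^ 2 + D^2 * Sshift C D n ^ 4"
  using dual_pair[of C D n] by blast

end

context char2 begin

lemma det_U: "Sshift (C::'a) D (n+2) * Sshift C D n ^ 2 + Sshift C D (n+1) ^ 3 = D ^ (2^(n+1) - 2)"
proof (induction n)
  case 0 then show ?case by (simp add: numeral_eq_Suc)
next
  case (Suc n)
  let ?U = "Sshift C D"
  define a0 a1 a2 a3 where "a0 = ?U n" "a1 = ?U (n+1)" "a2 = ?U (n+2)" "a3 = ?U (n+3)"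
  have IH: "a2 * a0^2 + a1^3 = D^(2^(n+1) - 2)" using Suc.IH unfolding a0_a1_a2_a3_def .
  have "(a2 * a0^2 + a1^3)^2 = (D^(2^(n+1) - 2))^2" using IH by simp
  then have "a2^2 * a0^4 + a1^6 = D^(2^(n+2) - 4)"
    unfolding sq_add by (simp add: power_mult_distrib power_mult[symmetric] algebra_simps)
  then have s6: "a1^6 = D^(2^(n+2) - 4) + a2^2 * a0^4"
    by (metis add_diff_cancel_left' minus)
  have ee: "n+1+2 = n+3" "n+1+1 = n+2" by simp_all
  have d1: "a3 = C * a2^2 + D^2 * a1^4" using dual[of C D "n+1"] unfolding a0_a1_a2_a3_def ee .
  have d0: "a2 = C * a1^2 + D^2 * a0^4" using dual[of C D n] unfolding a0_a1_a2_a3_def by simp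
  have ex: "D^2 * D^(2^(n+2) - 4) = D^(2^(n+2) - 2)"
  proof -
    have "(4::nat) \<le> 2^(n+2)" by (simp add: power_add)
    then have "2 + (2^(n+2) - 4) = 2^(n+2) - (2::nat)" by linarith
    then show ?thesis by (metis power_add)
  qed
  have "a3 * a1^2 + a2^3 = C * a2^2 * a1^2 + D^2 * a1^6 + a2^3"
    unfolding d1 by (simp add: algebra_simps power_add[symmetric] numeral_eq_Suc)
  also have "\<dots> = D^(2^(n+2) - 2) + a2^2 * (C * a1^2 + D^2 * a0^4) + a2^3"
    unfolding s6 ex[symmetric] by (simp add: algebra_simps)
  also have "\<dots> = D^(2^(n+2) - 2) + (a2^3 + a2^3)"
    by (subst d0[symmetric]) (simp add: algebra_simps power_add[symmetric] numeral_eq_Suc)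
  also have "\<dots> = D^(2^(n+2) - 2)" by (simp add: dbl)
  finally have X: "a3 * a1^2 + a2^3 = D^(2^(n+2) - 2)" .
  have e1: "Suc n + 2 = n+3" "Suc n + 1 = n+2" "Suc (Suc n) = n + 2" by simp_all
  have e2: "Suc n = n+1" by simp
  show ?case unfolding e1 unfolding e2 using X unfolding a0_a1_a2_a3_def .
qed

lemma pow_pow2: "((x::'a) ^ (2^i)) ^ (2^j) = x ^ (2^(i+j))"
  by (simp add: power_mult[symmetric] power_add mult.commute)

lemma split_U:
  "Sshift (C::'a) D (a+b+1) = Sshift C D (a+1) * Sshift C D (b+1) ^ (2^a)
     + D^(2^a) * Sshift C D a * Sshift C D b ^ (2^(a+1))"
proof (induction b rule: less_induct)
  case (less b)
  let ?U = "Sshift C D"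
  show ?case
  proof (cases b)
    case 0 then show ?thesis by simp
  next
    case (Suc b1)
    show ?thesis
    proof (cases b1)
      case 0
      with Suc show ?thesis by (simp add: power_mult_distrib mult.commute)
    next
      case (Suc b0)
      have bb: "b = b0 + 2" using \<open>b = Suc b1\<close> Suc by simp
      have IH1: "?U (a+b0+2) = ?U (a+1) * ?U (b0+2) ^ (2^a) + D^(2^a) * ?U a * ?U (b0+1) ^ (2^(a+1))"
        using less.IH[of "b0+1"] bb by (simp add: add.assoc)
      have IH0: "?U (a+b0+1) = ?U (a+1) * ?U (b0+1) ^ (2^a) + D^(2^a) * ?U a * ?U b0 ^ (2^(a+1))"
        using less.IH[of "b0"] bb by simp
      have rec: "?U (a+b0+3) = C^(2^(a+b0+1)) * ?U (a+b0+2) + D^(2^(a+b0+1)) * ?U (a+b0+1)"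
        by (simp add: numeral_eq_Suc)
      have rb2: "?U (b0+2) = C^(2^b0) * ?U (b0+1) + D^(2^b0) * ?U b0"
        by (simp add: numeral_eq_Suc)
      have rb3: "?U (b0+3) = C^(2^(b0+1)) * ?U (b0+2) + D^(2^(b0+1)) * ?U (b0+1)"
        by (simp add: numeral_eq_Suc)
      have ex1: "b0 + 1 + a = a + b0 + 1" and ex2: "b0 + (a+1) = a + b0 + 1" by simp_all
      have f3: "?U (b0+3) ^ (2^a) = C^(2^(a+b0+1)) * ?U (b0+2) ^ (2^a) + D^(2^(a+b0+1)) * ?U (b0+1) ^ (2^a)"
        unfolding rb3 frob_add power_mult_distrib pow_pow2 ex1 ..
      have f2: "?U (b0+2) ^ (2^(a+1)) = C^(2^(a+b0+1)) * ?U (b0+1) ^ (2^(a+1)) + D^(2^(a+b0+1)) * ?U b0 ^ (2^(a+1))"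
        unfolding rb2 frob_add power_mult_distrib pow_pow2 ex2 ..
      have main: "?U (a+b0+3) = ?U (a+1) * ?U (b0+3) ^ (2^a) + D^(2^a) * ?U a * ?U (b0+2) ^ (2^(a+1))"
        unfolding rec IH1 IH0 f3 f2 by (simp add: algebra_simps)
      have e: "a + (b0+2) + 1 = a+b0+3" "b0+2+1 = b0+3" by simp_all
      show ?thesis unfolding bb e using main .
    qed
  qed
qed

lemma Fq_U:
  assumes "C ^ (2^m) = (C::'a)" "D ^ (2^m) = D"
  shows "Sshift C D n ^ (2^m) = Sshift C D n"
proof (induction n rule: less_induct)
  case (less n)
  show ?case
  proof (cases n)
    case 0 then show ?thesis by simp
  next
    case (Suc n1)
    show ?thesis
    proof (cases n1)
      case 0 with Suc show ?thesis by simp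
    next
      case (Suc n0)
      have "Sshift C D n = C^(2^n0) * Sshift C D (Suc n0) + D^(2^n0) * Sshift C D n0"
        using \<open>n = Suc n1\<close> Suc by simp
      moreover have "(C^(2^n0))^(2^m) = C^(2^n0)" "(D^(2^n0))^(2^m) = D^(2^n0)"
        using assms by (simp_all add: power_mult[symmetric] mult.commute) (simp_all add: power_mult)
      ultimately show ?thesis using less.IH[of n0] less.IH[of "Suc n0"] \<open>n = Suc n1\<close> Suc
        by (simp add: frob_add power_mult_distrib)
    qed
  qed
qed

end

lemma telescope:
  fixes x y w a :: "nat \<Rightarrow> 'a::comm_ring"
  assumes "n \<ge> 2"
  shows "(\<Sum>i<n. x i * a (i+2) + y i * a (i+1) + w i * a i) =
    w 0 * a 0 + (y 0 + w 1) * a 1 + (\<Sum>j\<in>{2..<n}. (x (j-2) + y (j-1) + w j) * a j)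
    + (x (n-2) + y (n-1)) * a n + x (n-1) * a (n+1)"
  using assms
proof (induction n rule: nat_induct_at_least)
  case base
  then show ?case by (simp add: numeral_2_eq_2 algebra_simps)
next
  case (Suc n)
  have s: "{2..<Suc n} = insert n {2..<n}" using Suc.hyps by auto
  have n2: "Suc n - 2 = n - 1" "Suc n - 1 = n" using Suc.hyps by auto
  have "(\<Sum>i<Suc n. x i * a (i+2) + y i * a (i+1) + w i * a i)
     = (\<Sum>i<n. x i * a (i+2) + y i * a (i+1) + w i * a i) + (x n * a (n+2) + y n * a (n+1) + w n * a n)"
    by simp
  also have "\<dots> = w 0 * a 0 + (y 0 + w 1) * a 1 + (\<Sum>j\<in>{2..<n}. (x (j-2) + y (j-1) + w j) * a j)
    + (x (n-2) + y (n-1)) * a n + x (n-1) * a (n+1) + (x n * a (n+2) + y n * a (n+1) + w n * a n)"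
    using Suc.IH by simp
  also have "\<dots> = w 0 * a 0 + (y 0 + w 1) * a 1 + (\<Sum>j\<in>{2..<Suc n}. (x (j-2) + y (j-1) + w j) * a j)
    + (x (Suc n-2) + y (Suc n-1)) * a (Suc n) + x (Suc n-1) * a (Suc n+1)"
    unfolding s n2 by (simp add: algebra_simps)
  finally show ?case .
qed

lemma artin:
  fixes a :: "nat \<Rightarrow> 'a::{finite,field}"
  assumes "a 0 \<noteq> 0" "n \<ge> 1" "2 ^ (n - 1) < card (UNIV :: 'a set)"
  shows "\<exists>l. (\<Sum>k<n. a k * l ^ (2^k)) \<noteq> 0"
proof (rule ccontr)
  assume H: "\<not> ?thesis"
  define p where "p = (\<Sum>k<n. monom (a k) (2^k))"
  have ev: "poly p l = (\<Sum>k<n. a k * l ^ (2^k))" for l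
    unfolding p_def by (simp add: poly_sum poly_monom)
  have c1: "coeff p 1 = a 0"
  proof -
    have "coeff p 1 = (\<Sum>k<n. if 2^k = (1::nat) then a k else 0)"
      unfolding p_def coeff_sum coeff_monom by (intro sum.cong) auto
    also have "\<dots> = (\<Sum>k<n. if k = 0 then a k else 0)"
      by (intro sum.cong) auto
    also have "\<dots> = a 0" using assms(2) by (simp add: sum.delta)
    finally show ?thesis .
  qed
  then have pnz: "p \<noteq> 0" using assms(1) by auto
  have dg: "degree p \<le> 2 ^ (n - 1)"
    unfolding p_def
  proof (rule degree_sum_le)
    fix k assume "k \<in> {..<n}"
    then have "(2::nat) ^ k \<le> 2 ^ (n-1)" by (intro power_increasing) auto
    then show "degree (monom (a k) (2^k)) \<le> 2^(n-1)" using degree_monom_le order_trans by blast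
  qed simp
  have "{x. poly p x = 0} = UNIV" using H ev by auto
  then have "card (UNIV::'a set) \<le> degree p" using card_poly_roots_bound[OF pnz] by simp
  then show False using dg assms(3) by simp
qed

definition psi :: "'a::field \<Rightarrow> 'a \<Rightarrow> 'a \<times> 'a \<Rightarrow> 'a \<times> 'a" where
  "psi C D u = (snd u ^ 2, (fst u ^ 2 + C * snd u ^ 2) / D)"

context char2 begin

lemma move:
  assumes "(a::'a) = b + c" shows "a + b = c"
proof -
  have "a + b = c + (b + b)" using assms by (simp add: algebra_simps)
  then show ?thesis by (simp only: dbl add_0_right)
qed

lemma pow2_sq1: "((x::'a) ^ (2^(n+1))) ^ 2 = x ^ (2^(n+2))"
proof -
  have "(2::nat)^(n+2) = 2^(n+1) * 2" by simp
  then show ?thesis by (simp only: power_mult)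
qed

lemma psi_iter:
  fixes C D :: 'a
  assumes D0: "D \<noteq> 0"
  shows "Sshift C D (n+2) * fst ((psi C D ^^ Suc n) u) + D * Sshift C D (n+1)^2 * snd ((psi C D ^^ Suc n) u)
           = fst u ^ (2^(n+1)) \<and>
         Sshift C D (n+1) * fst ((psi C D ^^ Suc n) u) + D * Sshift C D n^2 * snd ((psi C D ^^ Suc n) u)
           = snd u ^ (2^(n+1))"
proof (induction n)
  case 0
  have "C * snd u ^ 2 + (fst u ^ 2 + C * snd u ^ 2) = fst u ^ 2"
    by (simp add: add.left_commute add.assoc[symmetric] dbl)
  then show ?case using D0 by (simp add: psi_def numeral_2_eq_2)
next
  case (Suc n)
  let ?U = "Sshift C D"
  define x y where "x = fst ((psi C D ^^ Suc n) u)" "y = snd ((psi C D ^^ Suc n) u)"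
  define z where "z = (x^2 + C * y^2) / D"
  define a0 a1 a2 a3 where "a0 = ?U n" "a1 = ?U (n+1)" "a2 = ?U (n+2)" "a3 = ?U (n+3)"
  have st: "(psi C D ^^ Suc (Suc n)) u = (y^2, z)"
    unfolding x_y_def z_def by (simp add: psi_def)
  have Dz: "D * z = x^2 + C * y^2" using D0 unfolding z_def by simp
  have IH1: "a2 * x + D * a1^2 * y = fst u ^ (2^(n+1))"
   and IH2: "a1 * x + D * a0^2 * y = snd u ^ (2^(n+1))"
    using Suc.IH unfolding x_y_def a0_a1_a2_a3_def by auto
  have ee: "n+1+2 = n+3" "n+1+1 = n+2" by simp_all
  have h1: "a3 = C * a2^2 + D^2 * a1^4"
    using dual[of C D "n+1"] unfolding ee a0_a1_a2_a3_def .
  have h0: "a2 = C * a1^2 + D^2 * a0^4"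
    using dual[of C D n] unfolding a0_a1_a2_a3_def .
  have d1: "a3 + C * a2^2 = D^2 * a1^4" by (rule move[OF h1])
  have d0: "a2 + C * a1^2 = D^2 * a0^4" by (rule move[OF h0])
  have g1: "a3 * y^2 + D * a2^2 * z = fst u ^ (2^(n+2))"
  proof -
    have "a3 * y^2 + D * a2^2 * z = a3 * y^2 + a2^2 * (D * z)" by (simp add: ac_simps)
    also have "\<dots> = a2^2 * x^2 + (a3 + C * a2^2) * y^2"
      unfolding Dz by (simp add: algebra_simps)
    also have "\<dots> = (a2 * x + D * a1^2 * y)^2"
      unfolding d1 sq_add by (simp add: power_mult_distrib algebra_simps power_mult[symmetric])
    also have "\<dots> = fst u ^ (2^(n+2))" unfolding IH1 pow2_sq1 ..
    finally show ?thesis .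
  qed
  have g2: "a2 * y^2 + D * a1^2 * z = snd u ^ (2^(n+2))"
  proof -
    have "a2 * y^2 + D * a1^2 * z = a2 * y^2 + a1^2 * (D * z)" by (simp add: ac_simps)
    also have "\<dots> = a1^2 * x^2 + (a2 + C * a1^2) * y^2"
      unfolding Dz by (simp add: algebra_simps)
    also have "\<dots> = (a1 * x + D * a0^2 * y)^2"
      unfolding d0 sq_add by (simp add: power_mult_distrib algebra_simps power_mult[symmetric])
    also have "\<dots> = snd u ^ (2^(n+2))" unfolding IH2 pow2_sq1 ..
    finally show ?thesis .
  qed
  have e3: "Suc n + 2 = n + 3" "Suc n + 1 = n + 2" "Suc (Suc n) = n + 2" by simp_all
  have e4: "Suc n = n + 1" by simp
  have e5: "Suc (n + 1) = n + 2" by simp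
  show ?case unfolding st fst_conv snd_conv unfolding e3 unfolding e4 e5
    using g1 g2 unfolding a0_a1_a2_a3_def by simp
qed

end

declare Sshift.simps(3)[simp del]

context char2 begin

lemma inv_pow:
  assumes D0: "(D::'a) \<noteq> 0" and FD: "D^(2^j) = D" and j: "j \<ge> 1"
  shows "D * D^(2^j - 2) = 1"
proof -
  have "(2::nat) \<le> 2^j" using j by (metis power_one_right power_increasing_iff one_less_numeral_iff semiring_norm(76))
  then have "2^j = Suc (Suc (2^j - 2))" by simp
  then have "D^(2^j) = D * (D * D^(2^j - 2))" by (metis power_Suc)
  with FD have "D * (D * D^(2^j - 2)) = D * 1" by simp
  with D0 show ?thesis using mult_left_cancel by blast
qed

lemma swap2: "(a::'a) + b = c \<Longrightarrow> b = c + a"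
  using move[of c a b] by (simp add: add.commute)

lemma pi2m:
  fixes C D :: 'a
  assumes FC: "C^(2^(k+1)) = C" and FD: "D^(2^(k+1)) = D" and D0: "D \<noteq> 0"
    and tau: "Sshift C D (k+2) + D * Sshift C D k ^ 2 = 0"
  shows "Sshift C D (2*k+3) = 1 \<and> Sshift C D (2*k+2) = 0 \<and> D * Sshift C D (2*k+1) ^ 2 = 1"
proof -
  let ?U = "Sshift C D"
  define a0 a1 a2 where "a0 = ?U k" "a1 = ?U (k+1)" "a2 = ?U (k+2)"
  have F: "?U n ^ (2^(k+1)) = ?U n" for n by (rule Fq_U[OF FC FD])
  have F2: "?U n ^ (2^(k+1+1)) = ?U n ^ 2" for n
    using pow2_sq[of "?U n" "k+1"] F[of n] by simp
  have s1: "?U (2*k+3) = a2^2 + D * a1^3"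
  proof -
    have "?U ((k+1)+(k+1)+1) = ?U (k+1+1) * ?U (k+1+1) ^ (2^(k+1)) + D^(2^(k+1)) * ?U (k+1) * ?U (k+1) ^ (2^(k+1+1))"
      by (rule split_U)
    moreover have e: "(k+1)+(k+1)+1 = 2*k+3" "k+1+1 = k+2" by simp_all
    ultimately have "?U (2*k+3) = a2 * a2 + D * a1 * a1^2" unfolding F2 F FD unfolding e a0_a1_a2_def by blast
    then show ?thesis by (simp add: power2_eq_square power3_eq_cube algebra_simps)
  qed
  have s2: "?U (2*k+2) = 0"
  proof -
    have "?U ((k+1)+k+1) = ?U (k+1+1) * ?U (k+1) ^ (2^(k+1)) + D^(2^(k+1)) * ?U (k+1) * ?U k ^ (2^(k+1+1))"
      by (rule split_U)
    moreover have e: "(k+1)+k+1 = 2*k+2" "k+1+1 = k+2" by simp_all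
    ultimately have "?U (2*k+2) = a2 * a1 + D * a1 * a0^2" unfolding F2 F FD unfolding e a0_a1_a2_def by blast
    then have "?U (2*k+2) = a1 * (a2 + D * a0^2)" by (simp add: algebra_simps)
    then show ?thesis using tau unfolding a0_a1_a2_def by simp
  qed
  have dk: "a2 * a0^2 + a1^3 = D^(2^(k+1) - 2)"
    using det_U[of C D k] unfolding a0_a1_a2_def .
  have i1: "D * D^(2^(k+1) - 2) = 1" by (rule inv_pow[OF D0 FD]) simp
  have "a1^3 = D^(2^(k+1) - 2) + a2 * a0^2" by (rule swap2[OF dk])
  then have Da: "D * a1^3 = 1 + a2 * (D * a0^2)" using i1 by (simp add: algebra_simps)
  have "?U (2*k+3) = a2 * (a2 + D * a0^2) + 1"
    unfolding s1 Da by (simp add: algebra_simps power2_eq_square)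
  also have "\<dots> = 1" using tau unfolding a0_a1_a2_def by simp
  finally have s3: "?U (2*k+3) = 1" .
  have FD2: "D^(2^(2*k+2)) = D"
  proof -
    have "D^(2^(2*k+2)) = (D^(2^(k+1)))^(2^(k+1))"
      using pow_pow2[of D "k+1" "k+1"] by (simp add: mult_2)
    then show ?thesis using FD by simp
  qed
  have i2: "D * D^(2^(2*k+2) - 2) = 1" by (rule inv_pow[OF D0 FD2]) simp
  have d2: "?U (2*k+1+2) * ?U (2*k+1) ^ 2 + ?U (2*k+1+1) ^ 3 = D ^ (2^(2*k+1+1) - 2)"
    by (rule det_U)
  have e: "2*k+1+2 = 2*k+3" "2*k+1+1 = 2*k+2" by simp_all
  have "?U (2*k+3) * ?U (2*k+1) ^ 2 + ?U (2*k+2) ^ 3 = D ^ (2^(2*k+2) - 2)"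
    using d2 unfolding e .
  then have "?U (2*k+1) ^ 2 = D ^ (2^(2*k+2) - 2)" unfolding s3 s2 by simp
  with i2 have "D * ?U (2*k+1) ^ 2 = 1" by simp
  with s2 s3 show ?thesis by simp
qed

lemma psi_period:
  fixes C D :: 'a
  assumes FC: "C^(2^(k+1)) = C" and FD: "D^(2^(k+1)) = D" and D0: "D \<noteq> 0"
    and tau: "Sshift C D (k+2) + D * Sshift C D k ^ 2 = 0"
    and Fer: "\<And>z::'a. z ^ (2^(2*k+2)) = z"
  shows "(psi C D ^^ (2*k+2)) u = u"
proof -
  note P = pi2m[OF FC FD D0 tau]
  have it: "Sshift C D (2*k+1+2) * fst ((psi C D ^^ Suc (2*k+1)) u) + D * Sshift C D (2*k+1+1)^2 * snd ((psi C D ^^ Suc (2*k+1)) u)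
           = fst u ^ (2^(2*k+1+1)) \<and>
         Sshift C D (2*k+1+1) * fst ((psi C D ^^ Suc (2*k+1)) u) + D * Sshift C D (2*k+1)^2 * snd ((psi C D ^^ Suc (2*k+1)) u)
           = snd u ^ (2^(2*k+1+1))"
    by (rule psi_iter[OF D0])
  have e: "2*k+1+2 = 2*k+3" "2*k+1+1 = 2*k+2" "Suc (2*k+1) = 2*k+2" by simp_all
  from it P have "fst ((psi C D ^^ (2*k+2)) u) = fst u" "snd ((psi C D ^^ (2*k+2)) u) = snd u"
    unfolding e using Fer by (simp_all add: mult.assoc[symmetric])
  then show ?thesis by (simp add: prod_eq_iff)
qed

end

lemma psi_scale:
  "(psi C D ^^ j) (l * x, l * y) = (l^(2^j) * fst ((psi C D ^^ j) (x, y)), l^(2^j) * snd ((psi C D ^^ j) (x, y)))"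
proof (induction j)
  case 0 then show ?case by simp
next
  case (Suc j)
  have e: "(l ^ (2^j))^2 = l^(2^Suc j)" by (simp add: power_mult[symmetric] mult.commute)
  show ?case using Suc by (simp add: psi_def power_mult_distrib e algebra_simps add_divide_distrib)
qed

lemma sum_shift_cyc:
  assumes "g N = g 0"
  shows "(\<Sum>j<N. g (Suc j)) = (\<Sum>j<N. (g j :: 'a::comm_ring))"
proof -
  have "(\<Sum>j<Suc N. g j) = g 0 + (\<Sum>j<N. g (Suc j))" by (rule sum.lessThan_Suc_shift)
  moreover have "(\<Sum>j<Suc N. g j) = (\<Sum>j<N. g j) + g N" by simp
  ultimately show ?thesis using assms by (simp add: add.commute)
qed

context char2 begin

lemma psi_sum:
  fixes g :: "'b \<Rightarrow> 'a \<times> 'a" and C D :: 'a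
  shows "psi C D (\<Sum>j\<in>A. fst (g j), \<Sum>j\<in>A. snd (g j)) = ((\<Sum>j\<in>A. fst (psi C D (g j))), (\<Sum>j\<in>A. snd (psi C D (g j))))"
proof -
  have s1: "(\<Sum>j\<in>A. snd (g j))^2 = (\<Sum>j\<in>A. (snd (g j))^2)"
    using frob_sum[of "\<lambda>j. snd (g j)" A 1] by simp
  have s2: "(\<Sum>j\<in>A. fst (g j))^2 = (\<Sum>j\<in>A. (fst (g j))^2)"
    using frob_sum[of "\<lambda>j. fst (g j)" A 1] by simp
  show ?thesis unfolding psi_def fst_conv snd_conv s1 s2
    by (simp add: sum_distrib_left sum.distrib[symmetric] sum_divide_distrib[symmetric])
qed

end

lemma root_exists:
  fixes C D :: "'a::{finite,field}"
  assumes c2: "(1::'a) + 1 = 0"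
    and FC: "C^(2^(k+1)) = C" and FD: "D^(2^(k+1)) = D" and D0: "D \<noteq> 0"
    and tau: "Sshift C D (k+2) + D * Sshift C D k ^ 2 = 0"
    and card: "card (UNIV::'a set) = 2^(2*k+2)"
  shows "\<exists>\<beta>. \<beta> \<noteq> 0 \<and> \<beta>^4 + C*\<beta>^2 + D*\<beta> = 0"
proof -
  have C2: "char2 TYPE('a)" unfolding char2_def using c2 .
  have Fer: "z ^ (2^(2*k+2)) = z" for z :: 'a using fermat[of z] card by simp
  have per: "(psi C D ^^ (2*k+2)) u = u" for u by (rule char2.psi_period[OF C2 FC FD D0 tau Fer])
  define N where "N = 2*k+2"
  define a where "a j = fst ((psi C D ^^ j) (1, 0))" for j
  have "\<exists>l. (\<Sum>j<N. a j * l ^ (2^j)) \<noteq> 0"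
  proof (rule artin)
    show "a 0 \<noteq> 0" unfolding a_def by simp
    show "1 \<le> N" unfolding N_def by simp
    show "2 ^ (N - 1) < card (UNIV::'a set)" unfolding card N_def by simp
  qed
  then obtain l where l: "(\<Sum>j<N. a j * l ^ (2^j)) \<noteq> 0" by blast
  define f where "f j = (psi C D ^^ j) (l, 0)" for j
  have ff: "fst (f j) = l^(2^j) * a j" for j
    using psi_scale[where C=C and D=D and j=j and l=l and x=1 and y=0] unfolding f_def a_def by simp
  define w where "w = (\<Sum>j<N. fst (f j), \<Sum>j<N. snd (f j))"
  have w1: "fst w \<noteq> 0" using l unfolding w_def fst_conv ff by (simp add: mult.commute)
  have fS: "psi C D (f j) = f (Suc j)" for j unfolding f_def by simp
  have fN: "f N = f 0" unfolding f_def N_def per by simp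
  have "psi C D w = w"
  proof -
    have "psi C D w = (\<Sum>j<N. fst (f (Suc j)), \<Sum>j<N. snd (f (Suc j)))"
      unfolding w_def char2.psi_sum[OF C2] fS ..
    also have "\<dots> = w" unfolding w_def
      using sum_shift_cyc[of "\<lambda>j. fst (f j)" N] sum_shift_cyc[of "\<lambda>j. snd (f j)" N] fN by simp
    finally show ?thesis .
  qed
  then have X: "(snd w ^ 2, (fst w ^ 2 + C * snd w ^ 2) / D) = w" unfolding psi_def .
  have h1: "fst w = snd w ^ 2" using arg_cong[OF X, of fst] by (simp only: fst_conv)
  have h2: "snd w = (fst w ^ 2 + C * snd w ^ 2) / D" using arg_cong[OF X, of snd] by (simp only: snd_conv)
  define \<beta> where "\<beta> = snd w"
  have bnz: "\<beta> \<noteq> 0" using w1 h1 unfolding \<beta>_def by auto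
  have "D * \<beta> = \<beta>^4 + C * \<beta>^2"
    using h2 D0 unfolding \<beta>_def h1[symmetric] by (simp add: field_simps h1 power_mult[symmetric])
  then have "\<beta>^4 + C*\<beta>^2 + D*\<beta> = D*\<beta> + D*\<beta>" by simp
  then show ?thesis using bnz char2.dbl[OF C2] by auto
qed

declare Sshift.simps(3)[simp del]

context char2 begin

lemma rec_U: "Sshift C D (n+2) = C^(2^n) * Sshift C D (n+1) + D^(2^n) * Sshift C D n"
  by (simp add: Sshift.simps(3) numeral_2_eq_2)

lemma sqpow: "((x::'a)^2)^(2^n) = x^(2^(n+1))"
  by (simp add: power_mult[symmetric] mult.commute)

lemma fourpow: "((x::'a)^4)^(2^n) = x^(2^(n+2))"
proof -
  have "(4::nat) * 2^n = 2^(n+2)" by simp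
  have "((x::'a)^4)^(2^n) = x^(4*2^n)" by (simp only: power_mult)
  then show ?thesis unfolding \<open>4 * 2^n = 2^(n+2)\<close> .
qed

lemma zero_of_eq: "(a::'a) = b \<Longrightarrow> a + b = 0"
  by (simp add: dbl)

lemma Dinv_step:
  assumes D0: "(D::'a) \<noteq> 0"
  shows "inverse D ^ (2^(n+1) - 1) * D^(2^n) = inverse D ^ (2^n - 1)"
proof -
  have e: "2^(n+1) - 1 = 2^n + (2^n - 1::nat)" by simp
  have "inverse D ^ (2^n) * D^(2^n) = 1" using D0 by (simp add: power_mult_distrib[symmetric])
  moreover have "inverse D ^ (2^n + (2^n - 1)) * D^(2^n) = (inverse D ^ (2^n) * D^(2^n)) * inverse D ^ (2^n - 1)"
    by (simp only: power_add mult.commute mult.left_commute mult.assoc)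
  ultimately show ?thesis unfolding e by simp
qed

lemma key:
  fixes C D t :: 'a and j :: nat
  assumes D0: "D \<noteq> 0" and FD: "D^(2^(j+2)) = D"
    and tau1: "Sshift C D (j+3) + D * Sshift C D (j+1)^2 = 1"
    and tq: "t^(2^(j+2)) = t"
  shows "(\<Sum>i<j+2. (Sshift C D (j+1-i)^(2^(i+1)) + inverse D ^ (2^(i+1)-1) * Sshift C D (i+1))
            * (t^4 + C*t^2 + D*t)^(2^i)) = t"
proof -
  let ?U = "Sshift C D"
  define E where "E = inverse D"
  define al where "al i = ?U (j+1-i)^(2^(i+1))" for i
  define be where "be i = E ^ (2^(i+1)-1) * ?U (i+1)" for i
  define c where "c i = al i + be i" for i
  define a where "a n = t^(2^n)" for n
  define x where "x i = c i" for i
  define y where "y i = c i * C^(2^i)" for i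
  define w where "w i = c i * D^(2^i)" for i
  have ED: "E * D = 1" unfolding E_def using D0 by simp
  have trm: "c i * (t^4 + C*t^2 + D*t)^(2^i) = x i * a (i+2) + y i * a (i+1) + w i * a i" for i
  proof -
    have "(t^4 + C*t^2 + D*t)^(2^i) = a (i+2) + C^(2^i) * a (i+1) + D^(2^i) * a i"
      unfolding frob_add power_mult_distrib fourpow sqpow a_def by simp
    then show ?thesis unfolding x_def y_def w_def by (simp add: algebra_simps)
  qed
  have "(\<Sum>i<j+2. (Sshift C D (j+1-i)^(2^(i+1)) + inverse D ^ (2^(i+1)-1) * Sshift C D (i+1))
            * (t^4 + C*t^2 + D*t)^(2^i)) = (\<Sum>i<j+2. c i * (t^4 + C*t^2 + D*t)^(2^i))"
    unfolding c_def al_def be_def E_def ..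
  also have "\<dots> = (\<Sum>i<j+2. x i * a (i+2) + y i * a (i+1) + w i * a i)"
    using trm by simp
  finally have S0: "(\<Sum>i<j+2. (Sshift C D (j+1-i)^(2^(i+1)) + inverse D ^ (2^(i+1)-1) * Sshift C D (i+1))
            * (t^4 + C*t^2 + D*t)^(2^i)) = (\<Sum>i<j+2. x i * a (i+2) + y i * a (i+1) + w i * a i)" .
  have T: "(\<Sum>i<j+2. x i * a (i+2) + y i * a (i+1) + w i * a i) = w 0 * a 0 + (y 0 + w 1) * a 1 + (\<Sum>jj\<in>{2..<j+2}. (x (jj-2) + y (jj-1) + w jj) * a jj)
    + (x (j+2-2) + y (j+2-1)) * a (j+2) + x (j+2-1) * a (j+2+1)"
    by (rule telescope) simp
  have M: "(\<Sum>jj\<in>{2..<j+2}. (x (jj-2) + y (jj-1) + w jj) * a jj) = 0"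
  proof (rule sum.neutral, rule ballI)
    fix jj assume "jj \<in> {2..<j+2}"
    then have jr: "2 \<le> jj" "jj < j + 2" by auto
    define l where "l = jj - 2"
    have l: "jj = l + 2" "l < j" using jr unfolding l_def by arith+
    define p where "p = j - l - 1"
    have p: "j = l + p + 1" using l unfolding p_def by arith
    have i1: "jj - 2 = l" "jj - 1 = l + 1" using l by simp_all
    have ja: "j+1-l = p+2" "j+1-(l+1) = p+1" "j+1-(l+2) = p" using p by simp_all
    have alz: "al l + al (l+1) * C^(2^(l+1)) + al (l+2) * D^(2^(l+2)) = 0"
    proof -
      have "?U (p+2) + (C * ?U (p+1)^2 + D^2 * ?U p^4) = 0" by (rule zero_of_eq[OF dual])
      then have "(?U (p+2) + (C * ?U (p+1)^2 + D^2 * ?U p^4))^(2^(l+1)) = 0" by simp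
      then show ?thesis unfolding al_def ja frob_add power_mult_distrib sqpow fourpow
        by (simp add: algebra_simps)
    qed
    have bez: "be l + be (l+1) * C^(2^(l+1)) + be (l+2) * D^(2^(l+2)) = 0"
    proof -
      have s1: "E^(2^(l+2+1)-1) * D^(2^(l+2)) = E^(2^(l+2)-1)" unfolding E_def by (rule Dinv_step[OF D0])
      have s2: "E^(2^(l+1+1)-1) * D^(2^(l+1)) = E^(2^(l+1)-1)" unfolding E_def by (rule Dinv_step[OF D0])
      have r: "?U (l+3) = C^(2^(l+1)) * ?U (l+2) + D^(2^(l+1)) * ?U (l+1)"
      proof -
        have e: "l+1+2 = l+3" "l+1+1 = l+2" by simp_all
        show ?thesis using rec_U[of C D "l+1"] unfolding e .
      qed
      have "be l + be (l+1) * C^(2^(l+1)) + be (l+2) * D^(2^(l+2))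
          = E^(2^(l+1)-1) * ?U (l+1) + E^(2^(l+2)-1) * ?U (l+2) * C^(2^(l+1)) + (E^(2^(l+3)-1) * D^(2^(l+2))) * ?U (l+3)"
        unfolding be_def by (simp add: algebra_simps numeral_eq_Suc)
      also have "\<dots> = E^(2^(l+2)-1) * (D^(2^(l+1)) * ?U (l+1) + C^(2^(l+1)) * ?U (l+2) + ?U (l+3))"
        using s1 s2[symmetric] by (simp add: algebra_simps numeral_eq_Suc)
      also have "\<dots> = 0" unfolding r by (simp add: algebra_simps two)
      finally show ?thesis .
    qed
    have "x (jj-2) + y (jj-1) + w jj = (al l + al (l+1) * C^(2^(l+1)) + al (l+2) * D^(2^(l+2)))
       + (be l + be (l+1) * C^(2^(l+1)) + be (l+2) * D^(2^(l+2)))"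
      unfolding i1 l x_def y_def w_def c_def by (simp add: algebra_simps)
    then show "(x (jj-2) + y (jj-1) + w jj) * a jj = 0" using alz bez by simp
  qed
  have e: "j+2-2 = j" "j+2-1 = j+1" "j+2+1 = j+3" by simp_all
  note S = S0[unfolded T M e add_0_right]
  have a0: "a 0 = t" by (simp add: a_def)
  have a1: "a 1 = t^2" by (simp add: a_def)
  have am: "a (j+2) = t" using tq by (simp add: a_def)
  have am1: "a (j+3) = t^2"
  proof -
    have e: "j+1+1 = j+2" "j+1+2 = j+3" by simp_all
    show ?thesis using pow2_sq1[of t "j+1"] tq unfolding e a_def by simp
  qed
  have Dm1: "D^(2^(j+2)-1) = 1"
  proof -
    obtain N where N: "(2::nat)^(j+2) = Suc N" by (cases "(2::nat)^(j+2)") auto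
    then have N1: "(2::nat)^(j+2) - 1 = N" by simp
    have "D * D^N = D * 1" using FD unfolding N power_Suc by simp
    then have "D^N = 1" using D0 mult_left_cancel by blast
    then show ?thesis unfolding N1 .
  qed
  have Einv: "E^n = inverse (D^n)" for n unfolding E_def by (rule power_inverse)
  have Em1: "E^(2^(j+2)-1) = 1" unfolding Einv Dm1 by simp
  have Ehalf: "E^(2^(j+1)-1) = D^(2^(j+1))"
  proof -
    have ex: "(2::nat)^(j+1) - 1 + 2^(j+1) = 2^(j+2) - 1" by simp
    have "D^(2^(j+1)-1) * D^(2^(j+1)) = D^(2^(j+2)-1)" by (simp only: power_add[symmetric] ex)
    then have "D^(2^(j+1)-1) * D^(2^(j+1)) = 1" using Dm1 by simp
    then have "inverse (D^(2^(j+1)-1)) = D^(2^(j+1))" by (rule inverse_unique)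
    then show ?thesis unfolding Einv .
  qed
  have U2: "?U 2 = C" using rec_U[of C D 0] by (simp add: numeral_2_eq_2)
  have c0: "c 0 = ?U (j+1)^2 + E" unfolding c_def al_def be_def by simp
  have c1: "c 1 = ?U j^4 + E^3 * C"
  proof -
    have e: "j+1-1 = j" "(1::nat)+1 = 2" "(2::nat)^2 = 4" "(2::nat)^2 - 1 = 3" by simp_all
    show ?thesis unfolding c_def al_def be_def e U2 by simp
  qed
  have cj: "c j = 1 + D^(2^(j+1)) * ?U (j+1)"
  proof -
    have e: "j+1-j = 1" by simp
    show ?thesis unfolding c_def al_def be_def e Ehalf by simp
  qed
  have cj1: "c (j+1) = ?U (j+2)"
  proof -
    have e: "j+1-(j+1) = 0" "j+1+1 = j+2" by simp_all
    show ?thesis unfolding c_def al_def be_def e Em1 by simp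
  qed
  have rj: "?U (j+3) = C^(2^(j+1)) * ?U (j+2) + D^(2^(j+1)) * ?U (j+1)"
  proof -
    have e: "j+1+2 = j+3" "j+1+1 = j+2" by simp_all
    show ?thesis using rec_U[of C D "j+1"] unfolding e .
  qed
  have coef1: "w 0 + (x j + y (j+1)) = 1"
  proof -
    have "w 0 + (x j + y (j+1)) = D * ?U (j+1)^2 + (E * D + 1) + (C^(2^(j+1)) * ?U (j+2) + D^(2^(j+1)) * ?U (j+1))"
      unfolding w_def x_def y_def c0 cj cj1 by (simp add: algebra_simps)
    also have "\<dots> = ?U (j+3) + D * ?U (j+1)^2" unfolding ED rj[symmetric] by (simp add: two algebra_simps)
    finally show ?thesis using tau1 by simp
  qed
  have coef2: "(y 0 + w 1) + x (j+1) = 0"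
  proof -
    have "E^3 * D^2 = E * ((E*D) * (E*D))" by (simp add: power3_eq_cube power2_eq_square ac_simps)
    then have E3: "E^3 * D^2 = E" unfolding ED by simp
    have "(y 0 + w 1) + x (j+1) = (C * ?U (j+1)^2 + D^2 * ?U j^4) + ?U (j+2) + (C * E + C * (E^3 * D^2))"
      unfolding w_def x_def y_def c0 c1 cj1 by (simp add: algebra_simps power2_eq_square)
    also have "\<dots> = 0" unfolding E3 using dual[of C D j] by (simp add: dbl two)
    finally show ?thesis .
  qed
  have "w 0 * a 0 + (y 0 + w 1) * a 1 + (x j + y (j+1)) * a (j+2) + x (j+1) * a (j+3)
      = (w 0 + (x j + y (j+1))) * t + ((y 0 + w 1) + x (j+1)) * t^2"
    unfolding a0 a1 am am1 by (simp add: algebra_simps)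
  also have "\<dots> = t" unfolding coef1 coef2 by simp
  finally show ?thesis using S by simp
qed

end

declare Sshift.simps(3)[simp del]

context char2 begin

lemma four_add: "((u::'a) + v)^4 = u^4 + v^4"
  using frob_add[of u v 2] by simp

lemma X4:
  fixes q K :: nat and t \<delta> b :: 'a
  assumes Fer: "\<And>z::'a. z^(q*q) = z" and fq: "\<And>u v::'a. (u+v)^q = u^q + v^q"
    and tq: "t^q = t" and K4: "4*K = 4 + q*q + q"
  shows "(b*(((t+\<delta>)^K)^q + (t+\<delta>)^K))^4 = b^4*(\<delta>^q+\<delta>)^4*(t^2 + (\<delta>^q+\<delta>)*t + \<delta>^q*\<delta>)"
proof -
  define z where "z = t + \<delta>"
  define Z where "Z = z^q"
  have Zq: "Z = t + \<delta>^q" unfolding Z_def z_def fq tq ..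
  have ZZ: "Z^q = z" unfolding Z_def power_mult[symmetric] by (rule Fer)
  have A: "((z^K)^q)^4 = Z^4 * Z * z"
  proof -
    have "((z^K)^q)^4 = z^(K*q*4)" by (simp only: power_mult)
    also have "K*q*4 = q*(4*K)" by simp
    also have "z^(q*(4*K)) = Z^(4*K)" unfolding Z_def by (simp only: power_mult)
    also have "\<dots> = Z^4 * Z^(q*q) * Z^q" unfolding K4 power_add ..
    finally show ?thesis unfolding Fer ZZ .
  qed
  have B: "(z^K)^4 = z^4 * z * Z"
  proof -
    have "(z^K)^4 = z^(4*K)" by (simp only: power_mult[symmetric] mult.commute)
    also have "\<dots> = z^4 * z^(q*q) * z^q" unfolding K4 power_add ..
    finally show ?thesis unfolding Fer Z_def .
  qed
  have "(b*(((t+\<delta>)^K)^q + (t+\<delta>)^K))^4 = b^4 * (((z^K)^q)^4 + (z^K)^4)"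
    unfolding z_def[symmetric] power_mult_distrib four_add ..
  also have "\<dots> = b^4 * (z*Z) * (Z^4 + z^4)" unfolding A B by (simp add: algebra_simps)
  also have "Z^4 + z^4 = (Z + z)^4" by (simp add: four_add)
  also have "Z + z = \<delta>^q + \<delta>"
  proof -
    have "Z + z = (\<delta>^q + \<delta>) + (t + t)" unfolding Zq z_def by (simp add: algebra_simps)
    then show ?thesis by (simp add: dbl)
  qed
  also have "z * Z = t^2 + (\<delta>^q+\<delta>)*t + \<delta>^q*\<delta>" unfolding Zq z_def by (simp add: algebra_simps power2_eq_square)
  finally show ?thesis by (simp add: algebra_simps)
qed

end

declare Sshift.simps(3)[simp del]

lemma pow_swap: "((x::'a::comm_monoid_mult)^a)^b = (x^b)^a"
  by (simp only: power_mult[symmetric] mult.commute)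

theorem theorem3p10:
  fixes m :: nat and q :: nat and b \<delta> :: "'a::{finite,field}"
    and P Pinv :: "'a \<Rightarrow> 'a" and B C D :: 'a
  assumes hq: "q = 2 ^ m" and hq4: "q \<ge> 4"
    and hcard: "card (UNIV :: 'a set) = q ^ 2"
    and hb: "b ^ q = b" and hb0: "b \<noteq> 0"
    and hdelta: "\<delta> ^ q \<noteq> \<delta>"
    and hB: "B = b ^ 4 * (\<delta> ^ q + \<delta>) ^ 4 * \<delta> ^ (q + 1)"
    and hC: "C = b ^ 4 * (\<delta> ^ q + \<delta>) ^ 4"
    and hD: "D = b ^ 4 * (\<delta> ^ q + \<delta>) ^ 5"
    and hP: "\<And>x. P x = b * (x ^ q + x + \<delta>) ^ (1 + (q ^ 2 + q) div 4) + x"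
    and hPinv: "\<And>x. Pinv x = x + b * (\<delta> + (\<Sum>i = 0..m - 1.
           ((S_seq C D (int m - 2 - int i)) ^ (2 ^ (i + 1))
             + inverse (D ^ (2 ^ (i + 1) - 1)) * S_seq C D (int i))
           * ((x ^ q + x) ^ 4 + B) ^ (2 ^ i))) ^ (1 + (q ^ 2 + q) div 4)"
    and hperm: "bij P"
  shows "(\<forall>x. Pinv (P x) = x) \<and> (\<forall>x. P (Pinv x) = x)"
proof -
  have m2: "m \<ge> 2"
  proof (rule ccontr)
    assume "\<not> m \<ge> 2" then have "m \<le> 1" by simp
    then have "(2::nat)^m \<le> 2^1" by (rule power_increasing) simp
    with hq hq4 show False by simp
  qed
  define j where "j = m - 2"
  have mj: "m = j + 2" using m2 unfolding j_def by simp
  have q2: "q = 2^(j+2)" using hq mj by simp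
  have qpos: "q > 0" using hq4 by simp
  have z0: "(0::'a)^q = 0" using qpos by (simp add: power_0_left)
  have qq: "q^2 = q*q" by (simp add: power2_eq_square)
  have card: "card (UNIV::'a set) = 2^(2*(j+1)+2)"
  proof -
    have "q^2 = 2^((j+2)*2)" unfolding q2 by (simp only: power_mult)
    also have "(j+2)*2 = 2*(j+1)+2" by simp
    finally show ?thesis using hcard by simp
  qed
  have ev: "even (card (UNIV::'a set))" unfolding card by simp
  have c2: "(1::'a) + 1 = 0" by (rule char2_from_card[where 'a='a, OF ev])
  have C2: "char2 TYPE('a)" unfolding char2_def using c2 .
  note dbl = char2.dbl[OF C2]
  note eq_of_sum0 = char2.eq_of_sum0[OF C2]
  note four_add = char2.four_add[OF C2]
  note sq_add = char2.sq_add[OF C2]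
  note two = char2.two[OF C2]
  have Fer: "z^(q*q) = z" for z :: 'a using fermat[of z] hcard qq by simp
  have fq: "(u+v)^q = u^q + v^q" for u v :: 'a using char2.frob_add[OF C2, of u v m] hq by simp
  define \<epsilon> where "\<epsilon> = \<delta>^q + \<delta>"
  have \<epsilon>q: "\<epsilon>^q = \<epsilon>"
    unfolding \<epsilon>_def fq by (simp add: power_mult[symmetric] Fer add.commute)
  have \<epsilon>0: "\<epsilon> \<noteq> 0"
  proof
    assume "\<epsilon> = 0"
    then have "\<delta>^q = \<delta>" unfolding \<epsilon>_def by (rule eq_of_sum0)
    with hdelta show False ..
  qed
  have hC': "C = b^4 * \<epsilon>^4" unfolding hC \<epsilon>_def ..
  have hD': "D = b^4 * \<epsilon>^5" unfolding hD \<epsilon>_def ..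
  have e5: "\<epsilon>^5 = \<epsilon>^4 * \<epsilon>"
  proof -
    have "\<epsilon>^5 = \<epsilon>^(Suc 4)" by simp
    also have "\<dots> = \<epsilon>^4 * \<epsilon>" by (rule power_Suc2)
    finally show ?thesis .
  qed
  have hD'': "D = b^4 * \<epsilon>^4 * \<epsilon>" unfolding hD' e5 by (simp add: mult.assoc)
  have hB': "B = b^4 * \<epsilon>^4 * (\<delta>^q * \<delta>)" unfolding hB \<epsilon>_def by simp
  have Cq: "C^q = C" unfolding hC' power_mult_distrib pow_swap[of b 4 q] pow_swap[of \<epsilon> 4 q] hb \<epsilon>q ..
  have Dq: "D^q = D" unfolding hD' power_mult_distrib pow_swap[of b 4 q] pow_swap[of \<epsilon> 5 q] hb \<epsilon>q ..
  have D0: "D \<noteq> 0" unfolding hD' using hb0 \<epsilon>0 by simp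
  have FC: "C^(2^(j+2)) = C" using Cq q2 by simp
  have FD: "D^(2^(j+2)) = D" using Dq q2 by simp
  define K where "K = 1 + (q^2 + q) div 4"
  have K4: "4*K = 4 + q*q + q"
  proof -
    have "q^2 + q = 4 * (2^j * q + 2^j)" unfolding q2 by (simp add: power_add power2_eq_square algebra_simps)
    then have "4 * ((q^2 + q) div 4) = q^2 + q" by simp
    then show ?thesis unfolding K_def qq by simp
  qed
  define Xf where "Xf t = b*(((t+\<delta>)^K)^q + (t+\<delta>)^K)" for t
  have X4: "(Xf t)^4 = C*t^2 + D*t + B" if tq: "t^q = t" for t
  proof -
    have "(Xf t)^4 = b^4*(\<delta>^q+\<delta>)^4*(t^2 + (\<delta>^q+\<delta>)*t + \<delta>^q*\<delta>)"
      unfolding Xf_def by (rule char2.X4[OF C2 Fer fq tq K4])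
    then show ?thesis unfolding hC' hD'' hB' \<epsilon>_def[symmetric] by (simp add: algebra_simps)
  qed
  have hPK: "P x = b * (x^q + x + \<delta>)^K + x" for x unfolding hP K_def ..
  let ?U = "Sshift C D"
  define \<tau> where "\<tau> = ?U (j+3) + D * ?U (j+1)^2"
  have \<tau>sq: "\<tau>^2 = \<tau>"
  proof -
    have e: "j+1+2 = j+3" "j+1+1 = j+2" by simp_all
    have r: "?U (j+3) = C^(2^(j+1)) * ?U (j+2) + D^(2^(j+1)) * ?U (j+1)"
      using char2.rec_U[OF C2, of C D "j+1"] unfolding e .
    have d: "?U (j+3) = C * ?U (j+2)^2 + D^2 * ?U (j+1)^4"
      using char2.dual[OF C2, of C D "j+1"] unfolding e .
    have "?U (j+3)^2 = (C^(2^(j+1)))^2 * ?U (j+2)^2 + (D^(2^(j+1)))^2 * ?U (j+1)^2"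
      unfolding r by (rule char2.sq_lin[OF C2])
    also have "(C^(2^(j+1)))^2 = C" using char2.pow2_sq[OF C2, of C "j+1"] FC by simp
    also have "(D^(2^(j+1)))^2 = D" using char2.pow2_sq[OF C2, of D "j+1"] FD by simp
    finally have s: "?U (j+3)^2 = C * ?U (j+2)^2 + D * ?U (j+1)^2" .
    have "\<tau>^2 = ?U (j+3)^2 + D^2 * ?U (j+1)^4"
      unfolding \<tau>_def sq_add by (simp add: power_mult_distrib power_mult[symmetric])
    also have "\<dots> = (C * ?U (j+2)^2 + D^2 * ?U (j+1)^4) + D * ?U (j+1)^2"
      unfolding s by (simp add: algebra_simps)
    also have "\<dots> = \<tau>" unfolding \<tau>_def d[symmetric] ..
    finally show ?thesis .
  qed
  have \<tau>nz: "\<tau> \<noteq> 0"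
  proof
    assume \<tau>0: "\<tau> = 0"
    have e1: "j+1+2 = j+3" "j+1+1 = j+2" by simp_all
    have FC': "C^(2^(j+1+1)) = C" using FC unfolding e1 .
    have FD': "D^(2^(j+1+1)) = D" using FD unfolding e1 .
    have tau': "?U (j+1+2) + D * ?U (j+1)^2 = 0" using \<tau>0 unfolding \<tau>_def e1 .
    obtain \<beta>0 where b0: "\<beta>0 \<noteq> 0" "\<beta>0^4 + C*\<beta>0^2 + D*\<beta>0 = 0"
      using root_exists[OF c2 FC' FD' D0 tau' card] by blast
    have Lq: "(\<beta>0^q)^4 + C*(\<beta>0^q)^2 + D*\<beta>0^q = 0"
    proof -
      have "(\<beta>0^4 + C*\<beta>0^2 + D*\<beta>0)^q = (\<beta>0^q)^4 + C*(\<beta>0^q)^2 + D*\<beta>0^q"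
        unfolding fq power_mult_distrib Cq Dq pow_swap[of \<beta>0 4 q] pow_swap[of \<beta>0 2 q] ..
      then show ?thesis using b0(2) z0 by simp
    qed
    obtain \<beta> where bb: "\<beta> \<noteq> 0" "\<beta>^q = \<beta>" "\<beta>^4 + C*\<beta>^2 + D*\<beta> = 0"
    proof (cases "\<beta>0^q = \<beta>0")
      case True then show ?thesis using that b0 by blast
    next
      case False
      define \<beta> where "\<beta> = \<beta>0 + \<beta>0^q"
      have "\<beta> \<noteq> 0"
      proof
        assume "\<beta> = 0" then have "\<beta>0 = \<beta>0^q" unfolding \<beta>_def by (rule eq_of_sum0)
        with False show False by simp
      qed
      moreover have "\<beta>^q = \<beta>" unfolding \<beta>_def fq by (simp add: power_mult[symmetric] Fer add.commute)
      moreover have "\<beta>^4 + C*\<beta>^2 + D*\<beta> = 0"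
      proof -
        have "\<beta>^4 + C*\<beta>^2 + D*\<beta> = (\<beta>0^4 + C*\<beta>0^2 + D*\<beta>0) + ((\<beta>0^q)^4 + C*(\<beta>0^q)^2 + D*\<beta>0^q)"
          unfolding \<beta>_def four_add sq_add by (simp add: algebra_simps)
        then show ?thesis using b0(2) Lq by simp
      qed
      ultimately show ?thesis using that by blast
    qed
    have L\<beta>: "\<beta>^4 = C*\<beta>^2 + D*\<beta>"
    proof (rule eq_of_sum0)
      show "\<beta>^4 + (C*\<beta>^2 + D*\<beta>) = 0" using bb(3) by (simp add: add.assoc)
    qed
    define x2 where "x2 = b * (\<delta>^K + (\<beta>+\<delta>)^K)"
    have Tx2: "x2^q + x2 = Xf 0 + Xf \<beta>"
      unfolding x2_def Xf_def power_mult_distrib fq hb by (simp add: algebra_simps)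
    have "(Xf 0 + Xf \<beta>)^4 = B + (C*\<beta>^2 + D*\<beta> + B)"
      unfolding four_add X4[OF bb(2)] using X4[of 0] z0 by simp
    also have "\<dots> = \<beta>^4" unfolding L\<beta> by (simp add: algebra_simps dbl two)
    finally have "(Xf 0 + Xf \<beta>)^(2^2) = \<beta>^(2^2)" by simp
    then have "Xf 0 + Xf \<beta> = \<beta>" by (rule char2.pow_inj[OF C2])
    then have Tx2': "x2^q + x2 = \<beta>" using Tx2 by simp
    have "P x2 = b * (\<beta> + \<delta>)^K + x2" unfolding hPK Tx2' ..
    also have "\<dots> = b * \<delta>^K + (b * (\<beta> + \<delta>)^K + b * (\<beta> + \<delta>)^K)"
      unfolding x2_def by (simp add: algebra_simps)
    also have "\<dots> = P 0" unfolding hPK dbl z0 by simp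
    finally have "P x2 = P 0" .
    moreover have "x2 \<noteq> 0"
    proof
      assume h: "x2 = 0"
      have "\<beta> = 0" using Tx2' unfolding h z0 by simp
      with bb(1) show False ..
    qed
    moreover have "inj P" using hperm by (rule bij_is_inj)
    ultimately show False by (meson injD)
  qed
  have \<tau>1: "\<tau> = 1"
  proof -
    have "\<tau> * \<tau> = \<tau> * 1" using \<tau>sq by (simp add: power2_eq_square)
    then show ?thesis using \<tau>nz by simp
  qed
  have inv1: "Pinv (P x) = x" for x
  proof -
    define t where "t = x^q + x"
    have "(x^q + x)^q = x^q + x" unfolding fq by (simp add: power_mult[symmetric] Fer add.commute)
    then have tq: "t^q = t" unfolding t_def .
    define y where "y = P x"
    have "y^q + y = x^q + (x + b*(((t+\<delta>)^K)^q + (t+\<delta>)^K))"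
      unfolding y_def hPK t_def[symmetric] fq power_mult_distrib hb by (simp add: algebra_simps)
    then have Ty: "y^q + y = t + Xf t" unfolding Xf_def t_def by (simp add: add.assoc)
    have Ly: "(y^q + y)^4 + B = t^4 + C*t^2 + D*t"
    proof -
      have "(y^q + y)^4 + B = t^4 + C*t^2 + D*t + (B + B)"
        unfolding Ty four_add X4[OF tq] by (simp add: algebra_simps)
      then show ?thesis by (simp add: dbl)
    qed
    have tq': "t^(2^(j+2)) = t" using tq q2 by simp
    have tau1': "?U (j+3) + D * ?U (j+1)^2 = 1" using \<tau>1 unfolding \<tau>_def .
    have key: "(\<Sum>i<j+2. (?U (j+1-i)^(2^(i+1)) + inverse D ^ (2^(i+1)-1) * ?U (i+1))
            * (t^4 + C*t^2 + D*t)^(2^i)) = t"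
      by (rule char2.key[OF C2 D0 FD tau1' tq'])
    have rng: "{0..m-1} = {..<j+2}" unfolding mj by auto
    have sm: "(\<Sum>i = 0..m - 1.
           ((S_seq C D (int m - 2 - int i)) ^ (2 ^ (i + 1))
             + inverse (D ^ (2 ^ (i + 1) - 1)) * S_seq C D (int i))
           * ((y ^ q + y) ^ 4 + B) ^ (2 ^ i)) = t"
      unfolding rng Ly
    proof (subst key[symmetric], rule sum.cong)
      fix i assume "i \<in> {..<j+2}"
      then have i: "i < j + 2" by simp
      have s1: "S_seq C D (int m - 2 - int i) = ?U (j+1-i)"
      proof -
        have "\<not> (int m - 2 - int i < -1)" using i mj by simp
        moreover have "nat (int m - 2 - int i + 1) = j + 1 - i" using i mj by simp
        ultimately show ?thesis unfolding S_seq_def by simp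
      qed
      have s2: "S_seq C D (int i) = ?U (i+1)"
      proof -
        have "nat (int i + 1) = i + 1" by simp
        then show ?thesis unfolding S_seq_def by simp
      qed
      show "((S_seq C D (int m - 2 - int i)) ^ (2 ^ (i + 1))
             + inverse (D ^ (2 ^ (i + 1) - 1)) * S_seq C D (int i))
           * (t^4 + C*t^2 + D*t) ^ (2 ^ i) =
           (?U (j+1-i)^(2^(i+1)) + inverse D ^ (2^(i+1)-1) * ?U (i+1)) * (t^4 + C*t^2 + D*t)^(2^i)"
        unfolding s1 s2 power_inverse ..
    qed simp
    have "Pinv y = y + b * (\<delta> + t)^(1 + (q ^ 2 + q) div 4)" unfolding hPinv sm ..
    also have "\<dots> = x + (b * (t + \<delta>)^K + b * (t + \<delta>)^K)"
      unfolding y_def hPK t_def K_def by (simp add: algebra_simps)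
    also have "\<dots> = x" unfolding dbl by simp
    finally show ?thesis unfolding y_def .
  qed
  have inv2: "P (Pinv x) = x" for x
  proof -
    obtain w where "x = P w" using hperm by (metis bij_pointE)
    then show ?thesis using inv1 by simp
  qed
  show ?thesis using inv1 inv2 by blast
qed

end
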